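(* Let $\sim$ denote either $\cong$ or $\simeq$. A type expression $A$ is a $\top$-variant if and only if $A\sim\top$.
   Context: Type expressions: fix a countably infinite set of type variables $X,Y,Z,\dots$. Pseudo type expressions are generated by $A::=X\mid A\to A\mid \bullet A\mid \mu X.A$ ($\mu$ binds $X$; $\alpha$-convertible expressions are identified; $\to$ associates to the right; $\bullet$ binds tighter than $\to$, which binds tighter than $\mu$). $A[B/X]$ denotes capture-avoiding substitution. $\top$ abbreviates $\mu X.\bullet X$, and $\bullet^n A$ denotes $A$ prefixed by $n$ copies of $\bullet$. The tail $t(A)$ is defined by $t(X)=X$, $t(A\to B)=t(B)$, $t(\bullet A)=\bullet t(A)$, $t(\mu X.A)=\mu X.t(A)$; it always has the form $\bullet^{m_0}\mu X_1.\bullet^{m_1}\mu X_2.\cdots\mu X_n.\bullet^{m_n}Y$. $A$ is a $\top$-variant iff $Y=X_i$ for some $1\le i\le n$ with $X_i\notin\{X_{i+1},\dots,X_n\}$ and $m_i+\dots+m_n\ge 1$. $A$ is proper in $X$ iff: a variable $Y$ is proper in $X$ iff $Y\neq X$; $\bullet A$ is always proper in $X$; $A\to B$ is proper in $X$ iff both $A,B$ are proper in $X$ or $B$ is a $\top$-variant; for $Y\ne X$, $\mu Y.A$ is proper in $X$ iff $A$ is proper in $X$ or $\mu Y.A$ is a $\top$-variant. Type expressions are the least set of pseudo type expressions containing all type variables, closed under $\to$ and $\bullet$, and containing $\mu X.A$ whenever it contains $A$ and $A$ is proper in $X$. Equality: $\cong$ is the least relation on type expressions such that: $A\cong A$; $A\cong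 B$ implies $B\cong A$; $A\cong B$ and $B\cong C$ imply $A\cong C$; $A\cong B$ implies $\bullet A\cong\bullet B$; $A\cong C$ and $B\cong D$ imply $A\to B\cong C\to D$; $A\to\top\cong\top$; $\mu X.A\cong A[\mu X.A/X]$; and if $A\cong C[A/X]$ with $C$ proper in $X$, then $A\cong\mu X.C$. $\simeq$ is the least relation satisfying the same closure conditions and additionally $\bullet(A\to B)\simeq\bullet A\to\bullet B$. *)

theory Defs
  imports Main
begin

text \<open>Type expressions in de Bruijn representation: alpha-convertible expressions
  are identified automatically.  A variable \<open>TVar j\<close> refers to the j-th enclosing
  \<open>\<mu>\<close>-binder if there is one, otherwise to a free type variable (free type variables
  form the countably infinite set of naturals).\<close>

datatype ty = TVar nat | Arr ty ty | Later ty | Mu ty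

fun lift :: "nat \<Rightarrow> ty \<Rightarrow> ty" where
  "lift k (TVar j) = (if j < k then TVar j else TVar (Suc j))"
| "lift k (Arr a b) = Arr (lift k a) (lift k b)"
| "lift k (Later a) = Later (lift k a)"
| "lift k (Mu a) = Mu (lift (Suc k) a)"

text \<open>\<open>subst A k B\<close> substitutes B for the variable with index k in A, removing that
  variable (indices above k are decremented). Hence for a \<mu>-body A,
  \<open>subst A 0 B\<close> is A[B/X] where X is the variable bound by the \<mu>.\<close>

fun subst :: "ty \<Rightarrow> nat \<Rightarrow> ty \<Rightarrow> ty" where
  "subst (TVar j) k B = (if j < k then TVar j else if j = k then B else TVar (j - 1))"
| "subst (Arr a b) k B = Arr (subst a k B) (subst b k B)"
| "subst (Later a) k B = Later (subst a k B)"
| "subst (Mu a) k B = Mu (subst a (Suc k) (lift 0 B))"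

definition Top :: ty where
  "Top = Mu (Later (TVar 0))"

fun tail :: "ty \<Rightarrow> ty" where
  "tail (TVar j) = TVar j"
| "tail (Arr a b) = tail b"
| "tail (Later a) = Later (tail a)"
| "tail (Mu a) = Mu (tail a)"

text \<open>\<open>guarded_bound T k g\<close>: the final variable of the tail-form T is the variable of
  index k (relative to the top of T), and at least one \<bullet> occurs between the top of
  T and that variable (or g already holds).\<close>

fun guarded_bound :: "ty \<Rightarrow> nat \<Rightarrow> bool \<Rightarrow> bool" where
  "guarded_bound (TVar j) k g = (j = k \<and> g)"
| "guarded_bound (Arr a b) k g = guarded_bound b k g"
| "guarded_bound (Later a) k g = guarded_bound a k True"
| "guarded_bound (Mu a) k g = guarded_bound a (Suc k) g"

text \<open>For T of the shape \<bullet>^m0 \<mu>X1. \<bullet>^m1 ... \<mu>Xn. \<bullet>^mn Y: there is a binder \<mu>Xi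
  binding Y (the innermost binder with that name, automatic in de Bruijn form)
  with m_i + ... + m_n \<ge> 1.\<close>

fun tv_tail :: "ty \<Rightarrow> bool" where
  "tv_tail (TVar j) = False"
| "tv_tail (Arr a b) = tv_tail b"
| "tv_tail (Later a) = tv_tail a"
| "tv_tail (Mu a) = (guarded_bound a 0 False \<or> tv_tail a)"

definition top_variant :: "ty \<Rightarrow> bool" where
  "top_variant A \<longleftrightarrow> tv_tail (tail A)"

fun proper :: "ty \<Rightarrow> nat \<Rightarrow> bool" where
  "proper (TVar j) k = (j \<noteq> k)"
| "proper (Later a) k = True"
| "proper (Arr a b) k = ((proper a k \<and> proper b k) \<or> top_variant b)"
| "proper (Mu a) k = (proper a (Suc k) \<or> top_variant (Mu a))"

inductive type_expr :: "ty \<Rightarrow> bool" where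
  te_var: "type_expr (TVar j)"
| te_arr: "type_expr a \<Longrightarrow> type_expr b \<Longrightarrow> type_expr (Arr a b)"
| te_later: "type_expr a \<Longrightarrow> type_expr (Later a)"
| te_mu: "type_expr a \<Longrightarrow> proper a 0 \<Longrightarrow> type_expr (Mu a)"

text \<open>Equality relations: \<open>ty_eq False\<close> is \<cong>, \<open>ty_eq True\<close> is \<simeq> (with the extra
  axiom \<bullet>(A\<rightarrow>B) \<simeq> \<bullet>A \<rightarrow> \<bullet>B).\<close>

inductive ty_eq :: "bool \<Rightarrow> ty \<Rightarrow> ty \<Rightarrow> bool" for d :: bool where
  eq_refl: "type_expr A \<Longrightarrow> ty_eq d A A"
| eq_sym: "ty_eq d A B \<Longrightarrow> ty_eq d B A"
| eq_trans: "ty_eq d A B \<Longrightarrow> ty_eq d B C \<Longrightarrow> ty_eq d A C"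
| eq_later: "ty_eq d A B \<Longrightarrow> ty_eq d (Later A) (Later B)"
| eq_arr: "ty_eq d A C \<Longrightarrow> ty_eq d B D \<Longrightarrow> ty_eq d (Arr A B) (Arr C D)"
| eq_arr_top: "type_expr A \<Longrightarrow> ty_eq d (Arr A Top) Top"
| eq_unfold: "type_expr (Mu A) \<Longrightarrow> ty_eq d (Mu A) (subst A 0 (Mu A))"
| eq_fix: "ty_eq d A (subst C 0 A) \<Longrightarrow> type_expr C \<Longrightarrow> proper C 0 \<Longrightarrow> ty_eq d A (Mu C)"
| eq_dist: "d \<Longrightarrow> type_expr A \<Longrightarrow> type_expr B \<Longrightarrow>
            ty_eq d (Later (Arr A B)) (Arr (Later A) (Later B))"

abbreviation cong_ty :: "ty \<Rightarrow> ty \<Rightarrow> bool" where "cong_ty \<equiv> ty_eq False"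
abbreviation simeq_ty :: "ty \<Rightarrow> ty \<Rightarrow> bool" where "simeq_ty \<equiv> ty_eq True"

end

theory Submission
  imports Defs
begin

datatype res = Tp | Bt | V nat nat

fun addn :: "nat \<Rightarrow> res \<Rightarrow> res" where
  "addn n (V j m) = V j (m + n)" | "addn n r = r"

fun liftR :: "nat \<Rightarrow> res \<Rightarrow> res" where
  "liftR k (V j m) = (if j < k then V j m else V (Suc j) m)" | "liftR k r = r"

fun substR :: "res \<Rightarrow> nat \<Rightarrow> res \<Rightarrow> res" where
  "substR (V j m) k s = (if j < k then V j m else if j = k then addn m s else V (j - 1) m)"
| "substR r k s = r"

fun muR :: "res \<Rightarrow> res" where
  "muR (V 0 m) = (if m > 0 then Tp else Bt)"
| "muR (V (Suc j) m) = V j m"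
| "muR r = r"

fun Fr :: "ty \<Rightarrow> res" where
  "Fr (TVar j) = V j 0"
| "Fr (Arr a b) = Fr b"
| "Fr (Later a) = addn 1 (Fr a)"
| "Fr (Mu a) = muR (Fr a)"

lemma muR_Tp[simp]: "muR r = Tp \<longleftrightarrow> r = Tp \<or> (\<exists>m>0. r = V 0 m)"
  by (cases r rule: muR.cases) auto
lemma muR_Bt[simp]: "muR r = Bt \<longleftrightarrow> r = Bt \<or> r = V 0 0"
  by (cases r rule: muR.cases) auto
lemma muR_V[simp]: "muR r = V k m \<longleftrightarrow> r = V (Suc k) m"
  by (cases r rule: muR.cases) auto
lemma addn_Tp[simp]: "addn n r = Tp \<longleftrightarrow> r = Tp" by (cases r) auto
lemma addn_Bt[simp]: "addn n r = Bt \<longleftrightarrow> r = Bt" by (cases r) auto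
lemma addn_V[simp]: "addn n r = V k m \<longleftrightarrow> (\<exists>m'. r = V k m' \<and> m = m' + n)" by (cases r) auto
lemma addn_0[simp]: "addn 0 r = r" by (cases r) auto
lemma addn_addn[simp]: "addn n (addn m r) = addn (m + n) r" by (cases r) auto

lemma F_lift: "Fr (lift k B) = liftR k (Fr B)"
proof (induction B arbitrary: k)
  case (Later B) then show ?case by (cases "Fr B") auto
next
  case (Mu B) then show ?case by (cases "Fr B" rule: muR.cases) auto
qed auto

lemma muR_aux: "muR (addn m (liftR 0 r)) = addn m r"
  by (cases r) auto

lemma F_subst: "Fr (subst a k B) = substR (Fr a) k (Fr B)"
proof (induction a arbitrary: k B)
  case (TVar x)
  then show ?case by (cases "Fr B") auto
next
  case (Arr a1 a2)
  then show ?case by simp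
next
  case (Later a)
  then show ?case by (cases "Fr a") auto
next
  case (Mu a)
  show ?case
  proof (cases "Fr a")
    case (V j m)
    then show ?thesis using Mu[of "Suc k" "lift 0 B"]
      by (cases j) (auto simp: F_lift muR_aux)
  qed (use Mu[of "Suc k" "lift 0 B"] in auto)
qed

lemma F_tail: "Fr (tail a) = Fr a"
  by (induction a) auto

lemma gb_F: "guarded_bound a k g \<longleftrightarrow> (\<exists>m. Fr a = V k m \<and> (g \<or> m > 0))"
proof (induction a arbitrary: k g)
  case (Later a) then show ?case by (cases "Fr a") auto
next
  case (Mu a) then show ?case by simp
qed auto

lemma tv_F: "tv_tail a \<longleftrightarrow> Fr a = Tp"
proof (induction a)
  case (Later a) then show ?case by (cases "Fr a") auto
next
  case (Mu a) then show ?case by (auto simp: gb_F)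
qed auto

lemma top_variant_F: "top_variant a \<longleftrightarrow> Fr a = Tp"
  by (simp add: top_variant_def tv_F F_tail)

lemma F_Top: "Fr Top = Tp" by (simp add: Top_def)

lemma proper_F: "proper C k \<Longrightarrow> Fr C \<noteq> V k 0"
proof (induction C arbitrary: k)
  case (Later a) then show ?case by (cases "Fr a") auto
next
  case (Arr a b) then show ?case by (auto simp: top_variant_F)
next
  case (Mu a) then show ?case by (auto simp: top_variant_F)
qed auto

lemma te_F: "type_expr A \<Longrightarrow> Fr A \<noteq> Bt"
proof (induction rule: type_expr.induct)
  case (te_later a) then show ?case by (cases "Fr a") auto
next
  case (te_mu a) then show ?case using proper_F[OF te_mu(2)] by auto
qed auto

lemma inv: "ty_eq d A B \<Longrightarrow> Fr A = Fr B \<and> Fr A \<noteq> Bt"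
proof (induction rule: ty_eq.induct)
  case (eq_refl A) then show ?case using te_F by auto
next
  case (eq_later A B) then show ?case by (metis addn_Bt Fr.simps(3))
next
  case (eq_sym A B)
  then have "Fr A = Fr B" "Fr A \<noteq> Bt" by auto
  then show ?case by (metis (full_types))
next
  case (eq_arr_top A) then show ?case by (simp add: F_Top)
next
  case (eq_unfold A)
  have "Fr (Mu A) \<noteq> Bt" using te_F eq_unfold by blast
  then show ?case by (cases "Fr A" rule: muR.cases) (auto simp: F_subst)
next
  case (eq_fix A C)
  have p: "Fr C \<noteq> V 0 0" using proper_F eq_fix by blast
  show ?case
  proof (cases "Fr C")
    case (V j n)
    show ?thesis
    proof (cases j)
      case 0
      with V p have "n > 0" by auto
      from eq_fix(4) V 0 have "Fr A = addn n (Fr A)" "Fr A \<noteq> Bt" by (auto simp: F_subst)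
      then have "Fr A = Tp" using \<open>n > 0\<close> by (cases "Fr A") auto
      then show ?thesis using V 0 \<open>n > 0\<close> by auto
    next
      case (Suc j') then show ?thesis using eq_fix(4) V by (auto simp: F_subst)
    qed
  qed (use eq_fix(4) in \<open>auto simp: F_subst\<close>)
next
  case (eq_dist A B) then show ?case using te_F[of B] by simp
qed auto

lemma lift_Top[simp]: "lift k Top = Top" by (simp add: Top_def)
lemma subst_Top[simp]: "subst Top k B = Top" by (simp add: Top_def)
lemma te_Top: "type_expr Top"
  unfolding Top_def by (rule te_mu) (auto intro: type_expr.intros)

lemma proper_subst_Top:
  "proper a k \<Longrightarrow> k \<noteq> j \<Longrightarrow> proper (subst a j Top) (if k < j then k else k - 1)"
proof (induction a arbitrary: j k)
  case (TVar x) then show ?case by (auto simp: Top_def)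
next
  case (Arr a b)
  from Arr.prems(1) have "(proper a k \<and> proper b k) \<or> top_variant b" by simp
  then show ?case
  proof
    assume "proper a k \<and> proper b k"
    then show ?thesis using Arr.IH[of k j] Arr.prems(2) by simp
  next
    assume "top_variant b"
    then have "top_variant (subst b j Top)" by (simp add: top_variant_F F_subst F_Top)
    then show ?thesis by simp
  qed
next
  case (Later a) then show ?case by simp
next
  case (Mu a)
  have "proper a (Suc k) \<or> top_variant (Mu a)" using Mu by simp
  then show ?case
  proof
    assume "proper a (Suc k)"
    from Mu.IH[OF this, of "Suc j"] Mu.prems show ?thesis by (auto split: if_splits)
  next
    assume "top_variant (Mu a)"
    then have "Fr (Mu a) = Tp" by (simp add: top_variant_F)
    then have "Fr (subst (Mu a) j Top) = Tp" by (simp only: F_subst F_Top) simp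
    then show ?thesis by (simp add: top_variant_F del: Fr.simps)
  qed
qed

lemma te_subst_Top: "type_expr a \<Longrightarrow> type_expr (subst a j Top)"
proof (induction arbitrary: j rule: type_expr.induct)
  case (te_var x) then show ?case using te_Top by (auto intro: type_expr.intros)
next
  case (te_mu a)
  have "proper (subst a (Suc j) Top) 0" using proper_subst_Top[OF te_mu(2), of "Suc j"] by simp
  then show ?case using te_mu by (auto intro: type_expr.intros)
qed (auto intro: type_expr.intros)

definition substs :: "ty \<Rightarrow> nat list \<Rightarrow> ty" where
  "substs a ks = foldl (\<lambda>t k. subst t k Top) a ks"

lemma substs_Nil[simp]: "substs a [] = a" by (simp add: substs_def)
lemma substs_snoc: "substs a (ks @ [k]) = subst (substs a ks) k Top" by (simp add: substs_def)

lemma substs_Arr: "substs (Arr a b) ks = Arr (substs a ks) (substs b ks)"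
  by (induction ks rule: rev_induct) (auto simp: substs_snoc)
lemma substs_Later: "substs (Later a) ks = Later (substs a ks)"
  by (induction ks rule: rev_induct) (auto simp: substs_snoc)
lemma substs_Mu: "substs (Mu a) ks = Mu (substs a (map Suc ks))"
  by (induction ks rule: rev_induct) (auto simp: substs_snoc)
lemma substs_TVar: "substs (TVar j) ks = Top \<or> (\<exists>j'. substs (TVar j) ks = TVar j')"
  by (induction ks rule: rev_induct) (auto simp: substs_snoc)
lemma te_substs: "type_expr a \<Longrightarrow> type_expr (substs a ks)"
  by (induction ks rule: rev_induct) (auto simp: substs_snoc te_subst_Top)
lemma proper_substs: "proper a 0 \<Longrightarrow> proper (substs a (map Suc ks)) 0"
proof (induction ks rule: rev_induct)
  case (snoc x xs)
  then show ?case using proper_subst_Top[of "substs a (map Suc xs)" 0 "Suc x"]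
    by (simp add: substs_snoc)
qed simp

lemma Top_later: "ty_eq d Top (Later Top)"
proof -
  have "ty_eq d (Mu (Later (TVar 0))) (subst (Later (TVar 0)) 0 (Mu (Later (TVar 0))))"
    by (rule eq_unfold) (fact te_Top[unfolded Top_def])
  then show ?thesis by (simp add: Top_def)
qed

lemma dir1: "type_expr a \<Longrightarrow> Fr (substs a ks) = Tp \<Longrightarrow> ty_eq d (substs a ks) Top"
proof (induction arbitrary: ks rule: type_expr.induct)
  case (te_var j)
  from substs_TVar[of j ks] te_var show ?case
    using te_Top by (auto intro: eq_refl)
next
  case (te_arr a b)
  have "ty_eq d (substs b ks) Top" using te_arr by (auto simp: substs_Arr)
  then have "ty_eq d (Arr (substs a ks) (substs b ks)) (Arr (substs a ks) Top)"
    using te_substs[OF te_arr(1)] by (auto intro: eq_arr eq_refl)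
  moreover have "ty_eq d (Arr (substs a ks) Top) Top"
    using te_substs[OF te_arr(1)] by (rule eq_arr_top)
  ultimately show ?case by (auto simp: substs_Arr intro: eq_trans)
next
  case (te_later a)
  have "Fr (substs a ks) = Tp" using te_later(3) by (cases "Fr (substs a ks)") (auto simp: substs_Later)
  then have "ty_eq d (substs a ks) Top" using te_later by auto
  then have "ty_eq d (Later (substs a ks)) (Later Top)" by (rule eq_later)
  then show ?case using Top_later by (auto simp: substs_Later intro: eq_trans eq_sym)
next
  case (te_mu a)
  let ?c = "substs a (map Suc ks)"
  have mc: "muR (Fr ?c) = Tp" using te_mu(4) by (simp add: substs_Mu)
  have "Fr (subst ?c 0 Top) = Tp"
    using mc by (cases "Fr ?c" rule: muR.cases) (auto simp: F_subst F_Top split: if_splits)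
  then have "ty_eq d (substs a (map Suc ks @ [0])) Top" using te_mu(3)[of "map Suc ks @ [0]"] by (simp add: substs_snoc)
  then have "ty_eq d Top (subst ?c 0 Top)" by (simp add: substs_snoc eq_sym)
  then have "ty_eq d Top (Mu ?c)"
    using te_substs[OF te_mu(1)] proper_substs[OF te_mu(2)] by (rule eq_fix)
  then show ?case by (simp add: substs_Mu eq_sym)
qed

lemma main: "type_expr A \<Longrightarrow> top_variant A \<longleftrightarrow> ty_eq d A Top"
proof
  assume "type_expr A" "top_variant A"
  then show "ty_eq d A Top" using dir1[of A "[]"] by (simp add: top_variant_F)
next
  assume "ty_eq d A Top"
  then show "top_variant A" using inv F_Top by (simp add: top_variant_F)
qed

theorem theorem4:
  assumes "type_expr A"
  shows "(top_variant A \<longleftrightarrow> cong_ty A Top) \<and> (top_variant A \<longleftrightarrow> simeq_ty A Top)"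
  using main[OF assms] by blast

end
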